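(* Let $\Gamma$ be a 3-colex and $c\in\{r,b,g,y\}$. The 3-cells of the minor complex $\Gamma^{*\setminus c}$ can be indexed by the $c$-vertices of $\Gamma^*$, the 3-cell $\nu_v$ indexed by the $c$-vertex $v$ being formed by merging all tetrahedra of $\Gamma^*$ incident on $v$; and the boundary of $\nu_v$ is the mod-2 sum of the $c$-faces of the tetrahedra incident on $v$: $\partial(\nu_v)=\sum_{\nu:\,v\in\nu}f^c_{\ni\nu}$.
   Context: Colors are $\{r,b,g,y\}$. A 3-colex $\Gamma$ is a 3-dimensional cell complex without boundary in which every vertex is 4-valent and lies in exactly four 3-cells, and whose 3-cells are properly 4-colored: every face lies in exactly two 3-cells, which have different colors. The dual complex $\Gamma^*$ has an $i$-cell for every $(3-i)$-cell of $\Gamma$, with incidences reversed; every 3-cell of $\Gamma^*$ is a tetrahedron. A vertex of $\Gamma^*$ is given the color of the corresponding 3-cell of $\Gamma$, so the four vertices of each tetrahedron have distinct colors. A face of $\Gamma^*$ is a $c$-face if none of its vertices has color $c$; each tetrahedron $\nu$ has a unique $c$-face, denoted $f^c_{\ni\nu}$. The minor complex $\Gamma^{*\setminus c}$ is obtained from $\Gamma^*$ by deleting all vertices of color $c$ together with all edges and faces incident to them; its 3-cells are the regions formed by merging tetrahedra of $\Gamma^*$ that are no longer separated by a remaining face. *)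

theory Defs
  imports Main
begin

datatype color = Red | Blue | Green | Yellow

text \<open>V: vertices of the dual (= 3-cells of the colex), col: their colours;
  T: tetrahedra of the dual (= vertices of the colex), tv: vertex set of a tetrahedron,
  tf: the faces of a tetrahedron; F: faces of the dual (= edges of the colex),
  fv: vertex set of a face.\<close>

definition dual_colex3 ::
  "'v set \<Rightarrow> ('v \<Rightarrow> color) \<Rightarrow> 't set \<Rightarrow> ('t \<Rightarrow> 'v set) \<Rightarrow> ('t \<Rightarrow> 'f set)
   \<Rightarrow> 'f set \<Rightarrow> ('f \<Rightarrow> 'v set) \<Rightarrow> bool" where
  "dual_colex3 V col T tv tf F fv \<longleftrightarrow>
     finite V \<and> finite T \<and> finite F \<and>
     \<comment> \<open>every 3-cell of the dual is a tetrahedron whose four vertices have distinct colours\<close>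
     (\<forall>\<nu>\<in>T. tv \<nu> \<subseteq> V \<and> card (tv \<nu>) = 4 \<and> inj_on col (tv \<nu>)) \<and>
     \<comment> \<open>the faces of a tetrahedron are its four triangles, one for each 3-subset of its vertices\<close>
     (\<forall>\<nu>\<in>T. tf \<nu> \<subseteq> F \<and> bij_betw fv (tf \<nu>) {S. S \<subseteq> tv \<nu> \<and> card S = 3}) \<and>
     \<comment> \<open>every face lies in exactly two 3-cells (each edge of the colex has two end vertices)\<close>
     (\<forall>f\<in>F. card {\<nu>\<in>T. f \<in> tf \<nu>} = 2) \<and>
     \<comment> \<open>every dual vertex (3-cell of the colex) is incident to some tetrahedron\<close>
     (\<forall>v\<in>V. \<exists>\<nu>\<in>T. v \<in> tv \<nu>) \<and>
     \<comment> \<open>3-cells of the colex are cells: the tetrahedra around a dual vertex v are connected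
         through faces containing v\<close>
     (\<forall>v\<in>V. \<forall>\<nu>\<in>T. \<forall>\<mu>\<in>T. v \<in> tv \<nu> \<longrightarrow> v \<in> tv \<mu> \<longrightarrow>
        (\<nu>, \<mu>) \<in> {(\<alpha>, \<beta>). \<alpha> \<in> T \<and> \<beta> \<in> T \<and> (\<exists>f \<in> tf \<alpha> \<inter> tf \<beta>. v \<in> fv f)}\<^sup>*)"

definition is_cface :: "('v \<Rightarrow> color) \<Rightarrow> ('f \<Rightarrow> 'v set) \<Rightarrow> color \<Rightarrow> 'f \<Rightarrow> bool" where
  "is_cface col fv c f \<longleftrightarrow> (\<forall>w\<in>fv f. col w \<noteq> c)"

definition cface_of :: "('v \<Rightarrow> color) \<Rightarrow> ('t \<Rightarrow> 'f set) \<Rightarrow> ('f \<Rightarrow> 'v set) \<Rightarrow> color \<Rightarrow> 't \<Rightarrow> 'f" where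
  "cface_of col tf fv c \<nu> = (THE f. f \<in> tf \<nu> \<and> is_cface col fv c f)"

text \<open>two tetrahedra are merged in the minor complex when they share a face that is
  deleted (i.e. a face that is not a c-face)\<close>
definition merge_rel :: "('v \<Rightarrow> color) \<Rightarrow> 't set \<Rightarrow> ('t \<Rightarrow> 'f set) \<Rightarrow> ('f \<Rightarrow> 'v set) \<Rightarrow> color
   \<Rightarrow> ('t \<times> 't) set" where
  "merge_rel col T tf fv c =
     {(\<alpha>, \<beta>). \<alpha> \<in> T \<and> \<beta> \<in> T \<and> (\<exists>f \<in> tf \<alpha> \<inter> tf \<beta>. \<not> is_cface col fv c f)}"

definition minor_cells :: "('v \<Rightarrow> color) \<Rightarrow> 't set \<Rightarrow> ('t \<Rightarrow> 'f set) \<Rightarrow> ('f \<Rightarrow> 'v set) \<Rightarrow> color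
   \<Rightarrow> 't set set" where
  "minor_cells col T tf fv c =
     {{\<mu> \<in> T. (\<nu>, \<mu>) \<in> (merge_rel col T tf fv c)\<^sup>*} | \<nu>. \<nu> \<in> T}"

text \<open>mod-2 sum of a finite family of 2-chains (2-chains over Z/2 = sets of faces)\<close>
definition sum2 :: "('a \<Rightarrow> 'f set) \<Rightarrow> 'a set \<Rightarrow> 'f set" where
  "sum2 X A = {f. odd (card {a \<in> A. f \<in> X a})}"

definition bd3 :: "('t \<Rightarrow> 'f set) \<Rightarrow> 't set \<Rightarrow> 'f set" where
  "bd3 tf R = sum2 tf R"

definition tets_at :: "'t set \<Rightarrow> ('t \<Rightarrow> 'v set) \<Rightarrow> 'v \<Rightarrow> 't set" where
  "tets_at T tv v = {\<nu> \<in> T. v \<in> tv \<nu>}"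

end

theory Submission
  imports Defs
begin

lemma univ_color: "(UNIV :: color set) = {Red, Blue, Green, Yellow}"
  using color.exhaust by auto

lemma finite_color[simp]: "finite (UNIV :: color set)"
  by (simp add: univ_color)

lemma card_color: "card (UNIV :: color set) = 4"
  by (simp add: univ_color)

theorem lemma3:
  fixes V :: "'v set" and col :: "'v \<Rightarrow> color" and T :: "'t set"
    and tv :: "'t \<Rightarrow> 'v set" and tf :: "'t \<Rightarrow> 'f set" and F :: "'f set"
    and fv :: "'f \<Rightarrow> 'v set" and c :: color
  assumes "dual_colex3 V col T tv tf F fv"
  shows "bij_betw (tets_at T tv) {v \<in> V. col v = c} (minor_cells col T tf fv c)
    \<and> (\<forall>v \<in> V. col v = c \<longrightarrow>
         bd3 tf (tets_at T tv v) = sum2 (\<lambda>\<nu>. {cface_of col tf fv c \<nu>}) (tets_at T tv v))"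
proof -
  note D = assms[unfolded dual_colex3_def]
  have tet: "\<And>\<nu>. \<nu> \<in> T \<Longrightarrow> tv \<nu> \<subseteq> V \<and> card (tv \<nu>) = 4 \<and> inj_on col (tv \<nu>)"
    using D by blast
  have tfb: "\<And>\<nu>. \<nu> \<in> T \<Longrightarrow> tf \<nu> \<subseteq> F \<and> bij_betw fv (tf \<nu>) {S. S \<subseteq> tv \<nu> \<and> card S = 3}"
    using D by blast
  have two: "\<And>f. f \<in> F \<Longrightarrow> card {\<nu>\<in>T. f \<in> tf \<nu>} = 2" using D by blast
  have inc: "\<And>v. v \<in> V \<Longrightarrow> \<exists>\<nu>\<in>T. v \<in> tv \<nu>" using D by blast
  have conn: "\<And>v \<nu> \<mu>. v \<in> V \<Longrightarrow> \<nu> \<in> T \<Longrightarrow> \<mu> \<in> T \<Longrightarrow> v \<in> tv \<nu> \<Longrightarrow> v \<in> tv \<mu> \<Longrightarrow>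
        (\<nu>, \<mu>) \<in> {(\<alpha>, \<beta>). \<alpha> \<in> T \<and> \<beta> \<in> T \<and> (\<exists>f \<in> tf \<alpha> \<inter> tf \<beta>. v \<in> fv f)}\<^sup>*"
    using D by blast
  have fvsub: "\<And>\<nu> f. \<nu> \<in> T \<Longrightarrow> f \<in> tf \<nu> \<Longrightarrow> fv f \<subseteq> tv \<nu> \<and> card (fv f) = 3"
    using tfb unfolding bij_betw_def by blast
  have cvert: "\<And>\<nu>. \<nu> \<in> T \<Longrightarrow> \<exists>v\<in>tv \<nu>. col v = c"
  proof -
    fix \<nu> assume "\<nu> \<in> T"
    then have "card (col ` tv \<nu>) = 4" using tet card_image by metis
    then have "col ` tv \<nu> = UNIV"
      using card_subset_eq[OF finite_color subset_UNIV, of "col ` tv \<nu>"] by (simp add: card_color)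
    then show "\<exists>v\<in>tv \<nu>. col v = c" by (metis UNIV_I imageE)
  qed
  have uniqc: "\<And>\<nu> v w. \<nu> \<in> T \<Longrightarrow> v \<in> tv \<nu> \<Longrightarrow> w \<in> tv \<nu> \<Longrightarrow> col v = c \<Longrightarrow> col w = c \<Longrightarrow> v = w"
    using tet by (metis inj_on_def)
  have cface_iff: "\<And>\<nu> v f. \<nu> \<in> T \<Longrightarrow> v \<in> tv \<nu> \<Longrightarrow> col v = c \<Longrightarrow> f \<in> tf \<nu> \<Longrightarrow>
      is_cface col fv c f \<longleftrightarrow> v \<notin> fv f"
    unfolding is_cface_def using fvsub uniqc by blast
  have cface_of: "\<And>\<nu> v. \<nu> \<in> T \<Longrightarrow> v \<in> tv \<nu> \<Longrightarrow> col v = c \<Longrightarrow>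
      cface_of col tf fv c \<nu> \<in> tf \<nu> \<and> is_cface col fv c (cface_of col tf fv c \<nu>)"
  proof -
    fix \<nu> v assume a: "\<nu> \<in> T" "v \<in> tv \<nu>" "col v = c"
    have fin: "finite (tv \<nu>)" using tet[OF a(1)] by (metis card.infinite zero_neq_numeral)
    have c3: "card (tv \<nu> - {v}) = 3" using tet[OF a(1)] a(2) fin by simp
    then have "tv \<nu> - {v} \<in> fv ` tf \<nu>" using tfb[OF a(1)] unfolding bij_betw_def by auto
    then obtain f where f: "f \<in> tf \<nu>" "fv f = tv \<nu> - {v}" by blast
    have ex: "f \<in> tf \<nu> \<and> is_cface col fv c f" using f cface_iff[OF a] by simp
    have un: "\<And>g. g \<in> tf \<nu> \<and> is_cface col fv c g \<Longrightarrow> g = f"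
    proof -
      fix g assume g: "g \<in> tf \<nu> \<and> is_cface col fv c g"
      then have "fv g \<subseteq> tv \<nu> - {v}" using cface_iff[OF a] fvsub[OF a(1)] by blast
      moreover have "card (fv g) = 3" using fvsub[OF a(1)] g by blast
      ultimately have "fv g = fv f" using f c3 fin
        by (metis card_subset_eq finite_Diff)
      then show "g = f" using tfb[OF a(1)] g f unfolding bij_betw_def inj_on_def by blast
    qed
    have "cface_of col tf fv c \<nu> = f" unfolding cface_of_def
      by (rule the_equality[where P="\<lambda>g. g \<in> tf \<nu> \<and> is_cface col fv c g", OF ex un])
    then show "cface_of col tf fv c \<nu> \<in> tf \<nu> \<and> is_cface col fv c (cface_of col tf fv c \<nu>)"
      using ex by simp
  qed
  define M where "M = merge_rel col T tf fv c"
  have cls: "\<And>\<nu> v. \<nu> \<in> T \<Longrightarrow> v \<in> tv \<nu> \<Longrightarrow> col v = c \<Longrightarrow>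
      {\<mu> \<in> T. (\<nu>, \<mu>) \<in> M\<^sup>*} = tets_at T tv v"
  proof -
    fix \<nu> v assume a: "\<nu> \<in> T" "v \<in> tv \<nu>" "col v = c"
    have "\<And>\<mu>. (\<nu>, \<mu>) \<in> M\<^sup>* \<Longrightarrow> \<mu> \<in> T \<and> v \<in> tv \<mu>"
    proof -
      fix \<mu> assume "(\<nu>, \<mu>) \<in> M\<^sup>*"
      then show "\<mu> \<in> T \<and> v \<in> tv \<mu>"
      proof (induction rule: rtrancl_induct)
        case base then show ?case using a by simp
      next
        case (step y z)
        then obtain f where f: "y \<in> T" "z \<in> T" "f \<in> tf y" "f \<in> tf z" "\<not> is_cface col fv c f"
          unfolding M_def merge_rel_def by blast
        then obtain w where w: "w \<in> fv f" "col w = c" unfolding is_cface_def by blast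
        have "w \<in> tv y" using fvsub f w by blast
        then have "w = v" using uniqc step.IH w a by blast
        then show ?case using fvsub f w by blast
      qed
    qed
    moreover have "\<And>\<mu>. \<mu> \<in> T \<Longrightarrow> v \<in> tv \<mu> \<Longrightarrow> (\<nu>, \<mu>) \<in> M\<^sup>*"
    proof -
      fix \<mu> assume b: "\<mu> \<in> T" "v \<in> tv \<mu>"
      have "v \<in> V" using tet a by blast
      have sub: "{(\<alpha>, \<beta>). \<alpha> \<in> T \<and> \<beta> \<in> T \<and> (\<exists>f \<in> tf \<alpha> \<inter> tf \<beta>. v \<in> fv f)} \<subseteq> M"
        unfolding M_def merge_rel_def is_cface_def using a(3) by blast
      show "(\<nu>, \<mu>) \<in> M\<^sup>*"
        using rtrancl_mono[OF sub] conn[OF \<open>v \<in> V\<close> a(1) b(1) a(2) b(2)] by blast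
    qed
    ultimately show "{\<mu> \<in> T. (\<nu>, \<mu>) \<in> M\<^sup>*} = tets_at T tv v"
      unfolding tets_at_def by blast
  qed
  have part1: "bij_betw (tets_at T tv) {v \<in> V. col v = c} (minor_cells col T tf fv c)"
    unfolding bij_betw_def
  proof
    show "inj_on (tets_at T tv) {v \<in> V. col v = c}"
    proof (rule inj_onI)
      fix v w assume v: "v \<in> {v \<in> V. col v = c}" and w: "w \<in> {v \<in> V. col v = c}"
        and e: "tets_at T tv v = tets_at T tv w"
      obtain \<nu> where "\<nu> \<in> T" "v \<in> tv \<nu>" using inc v by blast
      then have "w \<in> tv \<nu>" using e unfolding tets_at_def by blast
      then show "v = w" using uniqc \<open>\<nu> \<in> T\<close> \<open>v \<in> tv \<nu>\<close> v w by blast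
    qed
  next
    show "tets_at T tv ` {v \<in> V. col v = c} = minor_cells col T tf fv c"
    proof
      show "tets_at T tv ` {v \<in> V. col v = c} \<subseteq> minor_cells col T tf fv c"
      proof
        fix X assume "X \<in> tets_at T tv ` {v \<in> V. col v = c}"
        then obtain v where v: "v \<in> V" "col v = c" "X = tets_at T tv v" by blast
        obtain \<nu> where "\<nu> \<in> T" "v \<in> tv \<nu>" using inc v by blast
        then show "X \<in> minor_cells col T tf fv c"
          using cls[of \<nu> v] v unfolding minor_cells_def M_def by blast
      qed
    next
      show "minor_cells col T tf fv c \<subseteq> tets_at T tv ` {v \<in> V. col v = c}"
      proof
        fix X assume "X \<in> minor_cells col T tf fv c"
        then obtain \<nu> where n: "\<nu> \<in> T" "X = {\<mu> \<in> T. (\<nu>, \<mu>) \<in> M\<^sup>*}"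
          unfolding minor_cells_def M_def by blast
        obtain v where "v \<in> tv \<nu>" "col v = c" using cvert n by blast
        moreover then have "v \<in> V" using tet n by blast
        ultimately show "X \<in> tets_at T tv ` {v \<in> V. col v = c}"
          using cls n by blast
      qed
    qed
  qed
  have part2: "\<And>v. v \<in> V \<Longrightarrow> col v = c \<Longrightarrow>
         bd3 tf (tets_at T tv v) = sum2 (\<lambda>\<nu>. {cface_of col tf fv c \<nu>}) (tets_at T tv v)"
  proof -
    fix v assume v: "v \<in> V" "col v = c"
    define R where "R = tets_at T tv v"
    have R: "\<And>a. a \<in> R \<longleftrightarrow> a \<in> T \<and> v \<in> tv a" unfolding R_def tets_at_def by blast
    have "\<And>f. odd (card {a \<in> R. f \<in> tf a}) \<longleftrightarrow> odd (card {a \<in> R. f \<in> {cface_of col tf fv c a}})"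
    proof -
      fix f
      show "odd (card {a \<in> R. f \<in> tf a}) \<longleftrightarrow> odd (card {a \<in> R. f \<in> {cface_of col tf fv c a}})"
      proof (cases "v \<in> fv f")
        case True
        have "{a \<in> R. f \<in> {cface_of col tf fv c a}} = {}"
          using cface_of R v True unfolding is_cface_def by fastforce
        moreover have "even (card {a \<in> R. f \<in> tf a})"
        proof (cases "\<exists>a\<in>R. f \<in> tf a")
          case True2: True
          then obtain a where "a \<in> R" "f \<in> tf a" by blast
          then have "f \<in> F" using tfb R by blast
          have "{a \<in> R. f \<in> tf a} = {\<nu>\<in>T. f \<in> tf \<nu>}"
            using R fvsub True by blast
          then show ?thesis using two[OF \<open>f \<in> F\<close>] by simp
        next
          case False
          have "{a \<in> R. f \<in> tf a} = {}" using False by blast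
          then show ?thesis by (metis card.empty even_zero)
        qed
        ultimately show ?thesis by (metis card.empty even_zero)
      next
        case False
        have "{a \<in> R. f \<in> tf a} = {a \<in> R. f \<in> {cface_of col tf fv c a}}"
        proof (rule Collect_cong)
          fix a
          show "(a \<in> R \<and> f \<in> tf a) = (a \<in> R \<and> f \<in> {cface_of col tf fv c a})"
          proof (cases "a \<in> R")
            case True
            then have a: "a \<in> T" "v \<in> tv a" using R by auto
            have "f \<in> tf a \<longleftrightarrow> f = cface_of col tf fv c a"
            proof
              assume fa: "f \<in> tf a"
              then have "is_cface col fv c f" using cface_iff[OF a v(2)] False by blast
              moreover have "\<And>g. g \<in> tf a \<and> is_cface col fv c g \<Longrightarrow> g = cface_of col tf fv c a"
              proof -
                fix g assume g: "g \<in> tf a \<and> is_cface col fv c g"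
                have h: "cface_of col tf fv c a \<in> tf a \<and> is_cface col fv c (cface_of col tf fv c a)"
                  using cface_of[OF a v(2)] .
                have "fv g \<subseteq> tv a - {v}" "fv (cface_of col tf fv c a) \<subseteq> tv a - {v}"
                  using cface_iff[OF a v(2)] fvsub[OF a(1)] g h by blast+
                moreover have "card (fv g) = 3" "card (fv (cface_of col tf fv c a)) = 3"
                  using fvsub[OF a(1)] g h by blast+
                moreover have fin: "finite (tv a)" using tet[OF a(1)]
                  by (metis card.infinite zero_neq_numeral)
                moreover have "card (tv a - {v}) = 3" using tet[OF a(1)] a(2) fin by simp
                ultimately have "fv g = fv (cface_of col tf fv c a)"
                  by (metis card_subset_eq finite_Diff)
                then show "g = cface_of col tf fv c a"
                  using tfb[OF a(1)] g h unfolding bij_betw_def inj_on_def by blast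
              qed
              ultimately show "f = cface_of col tf fv c a" using fa by blast
            next
              assume "f = cface_of col tf fv c a"
              then show "f \<in> tf a" using cface_of[OF a v(2)] by blast
            qed
            then show ?thesis by simp
          qed simp
        qed
        then show ?thesis by simp
      qed
    qed
    then show "bd3 tf (tets_at T tv v) = sum2 (\<lambda>\<nu>. {cface_of col tf fv c \<nu>}) (tets_at T tv v)"
      unfolding bd3_def sum2_def R_def[symmetric] by blast
  qed
  show ?thesis using part1 part2 by blast
qed

end
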